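(* Let $G_{\lambda,k}$ be a skeleton of a connected graph $G$, and let $G''=G_{(\lambda,k)_{(2,2)}}$. If two sets of vertices are $n$-disjoint in $G''$ for some $n>1$, then their preimages in $G_{\lambda,k}$ (under the natural map $G_{\lambda,k}\to G''$) are $(n+\frac n2)$-disjoint.
   Context: $d$ is the graph metric of the relevant graph. Sets $X,Y$ are $r$-disjoint if $d(a,b)>r$ for all $a\in X,b\in Y$. A set $X$ is $k$-connected if any two of its points are joined by a finite sequence in $X$ with consecutive distances $\le k$. Skeleton $\Gamma_{\lambda,k}$ of a connected graph $\Gamma$ (root $x_0$, scale $\lambda\ge1$, connectivity $k\ge1$): layers $A_{N,\lambda}=\{x: N\lambda<d(x,x_0)\le(N+1)\lambda\}$, $N\in\mathbb Z$; blocks are the maximal $k$-connected subsets of layers (distances in $\Gamma$); $\Gamma_{\lambda,k}$ has a vertex per block and an edge between two blocks iff an edge of $\Gamma$ joins them; the natural map sends each vertex to its block. $G_{(\lambda,k)_{(2,2)}}$ is the skeleton of the graph $G_{\lambda,k}$ with scale $2$ and connectivity $2$, rooted at the block containing the root of $G$. *)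

theory Defs
  imports Complex_Main
begin

definition is_walk :: "('a \<Rightarrow> 'a \<Rightarrow> bool) \<Rightarrow> 'a list \<Rightarrow> bool" where
  "is_walk E xs \<longleftrightarrow> xs \<noteq> [] \<and> (\<forall>i. Suc i < length xs \<longrightarrow> E (xs ! i) (xs ! Suc i))"

definition conn_graph :: "'a set \<Rightarrow> ('a \<Rightarrow> 'a \<Rightarrow> bool) \<Rightarrow> bool" where
  "conn_graph V E \<longleftrightarrow> V \<noteq> {} \<and> (\<forall>x y. E x y \<longrightarrow> x \<in> V \<and> y \<in> V) \<and> (\<forall>x y. E x y \<longrightarrow> E y x)
     \<and> (\<forall>x\<in>V. \<forall>y\<in>V. \<exists>xs. is_walk E xs \<and> hd xs = x \<and> last xs = y)"

definition gdist :: "('a \<Rightarrow> 'a \<Rightarrow> bool) \<Rightarrow> 'a \<Rightarrow> 'a \<Rightarrow> nat" where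
  "gdist E x y = (LEAST n. \<exists>xs. is_walk E xs \<and> hd xs = x \<and> last xs = y \<and> length xs = Suc n)"

definition r_disjoint :: "('a \<Rightarrow> 'a \<Rightarrow> bool) \<Rightarrow> real \<Rightarrow> 'a set \<Rightarrow> 'a set \<Rightarrow> bool" where
  "r_disjoint E r X Y \<longleftrightarrow> (\<forall>a\<in>X. \<forall>b\<in>Y. real (gdist E a b) > r)"

definition k_connected :: "('a \<Rightarrow> 'a \<Rightarrow> bool) \<Rightarrow> real \<Rightarrow> 'a set \<Rightarrow> bool" where
  "k_connected E k X \<longleftrightarrow> (\<forall>x\<in>X. \<forall>y\<in>X. \<exists>xs. xs \<noteq> [] \<and> hd xs = x \<and> last xs = y \<and> set xs \<subseteq> X
      \<and> (\<forall>i. Suc i < length xs \<longrightarrow> real (gdist E (xs ! i) (xs ! Suc i)) \<le> k))"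

definition layer :: "'a set \<Rightarrow> ('a \<Rightarrow> 'a \<Rightarrow> bool) \<Rightarrow> 'a \<Rightarrow> real \<Rightarrow> int \<Rightarrow> 'a set" where
  "layer V E x0 lam N = {x \<in> V. real_of_int N * lam < real (gdist E x x0) \<and> real (gdist E x x0) \<le> (real_of_int N + 1) * lam}"

definition skel_verts :: "'a set \<Rightarrow> ('a \<Rightarrow> 'a \<Rightarrow> bool) \<Rightarrow> 'a \<Rightarrow> real \<Rightarrow> real \<Rightarrow> 'a set set" where
  "skel_verts V E x0 lam k = {B. \<exists>N::int. B \<noteq> {} \<and> B \<subseteq> layer V E x0 lam N \<and> k_connected E k B \<and>
      (\<forall>C. B \<subseteq> C \<and> C \<subseteq> layer V E x0 lam N \<and> k_connected E k C \<longrightarrow> C = B)}"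

definition skel_edges :: "'a set \<Rightarrow> ('a \<Rightarrow> 'a \<Rightarrow> bool) \<Rightarrow> 'a \<Rightarrow> real \<Rightarrow> real \<Rightarrow> 'a set \<Rightarrow> 'a set \<Rightarrow> bool" where
  "skel_edges V E x0 lam k B C \<longleftrightarrow> B \<in> skel_verts V E x0 lam k \<and> C \<in> skel_verts V E x0 lam k \<and> B \<noteq> C
      \<and> (\<exists>x\<in>B. \<exists>y\<in>C. E x y)"

definition skel_root :: "'a set \<Rightarrow> ('a \<Rightarrow> 'a \<Rightarrow> bool) \<Rightarrow> 'a \<Rightarrow> real \<Rightarrow> real \<Rightarrow> 'a set" where
  "skel_root V E x0 lam k = (THE B. B \<in> skel_verts V E x0 lam k \<and> x0 \<in> B)"

definition nat_map :: "'a set \<Rightarrow> ('a \<Rightarrow> 'a \<Rightarrow> bool) \<Rightarrow> 'a \<Rightarrow> real \<Rightarrow> real \<Rightarrow> 'a \<Rightarrow> 'a set" where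
  "nat_map V E x0 lam k x = (THE B. B \<in> skel_verts V E x0 lam k \<and> x \<in> B)"

end

theory Submission
  imports Defs
begin

lemma walk_succ: "is_walk E xs \<longleftrightarrow> xs \<noteq> [] \<and> successively E xs"
  unfolding is_walk_def successively_conv_nth by blast

lemma gdist_le: assumes "is_walk E xs" shows "gdist E (hd xs) (last xs) \<le> length xs - 1"
proof -
  have ne: "xs \<noteq> []" using assms by (simp add: walk_succ)
  then have "length xs = Suc (length xs - 1)" by simp
  then have "\<exists>ys. is_walk E ys \<and> hd ys = hd xs \<and> last ys = last xs \<and> length ys = Suc (length xs - 1)"
    using assms by blast
  then show ?thesis unfolding gdist_def by (rule Least_le)
qed

lemma gdist_walk: assumes "is_walk E xs" shows "\<exists>ws. is_walk E ws \<and> hd ws = hd xs \<and> last ws = last xs \<and> length ws = Suc (gdist E (hd xs) (last xs))"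
proof -
  have ne: "xs \<noteq> []" using assms by (simp add: walk_succ)
  then have "length xs = Suc (length xs - 1)" by simp
  then have "\<exists>n. \<exists>ys. is_walk E ys \<and> hd ys = hd xs \<and> last ys = last xs \<and> length ys = Suc n"
    using assms by blast
  then show ?thesis unfolding gdist_def by (rule LeastI_ex)
qed

lemma walk_rev: assumes "\<forall>x y. E x y \<longrightarrow> E y x" shows "is_walk E (rev xs) \<longleftrightarrow> is_walk E xs"
proof -
  have "successively (\<lambda>x y. E y x) xs \<longleftrightarrow> successively E xs"
  proof
    assume "successively (\<lambda>x y. E y x) xs" then show "successively E xs"
      by (rule successively_mono) (use assms in blast)
  next
    assume "successively E xs" then show "successively (\<lambda>x y. E y x) xs"
      by (rule successively_mono) (use assms in blast)
  qed
  then show ?thesis unfolding walk_succ successively_rev by simp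
qed

lemma gdist_sym: assumes "\<forall>x y. E x y \<longrightarrow> E y x" shows "gdist E x y = gdist E y x"
proof -
  note rw = walk_rev[OF assms]
  have "(\<lambda>n. \<exists>xs. is_walk E xs \<and> hd xs = x \<and> last xs = y \<and> length xs = Suc n)
      = (\<lambda>n. \<exists>xs. is_walk E xs \<and> hd xs = y \<and> last xs = x \<and> length xs = Suc n)"
  proof (intro ext iffI)
    fix n assume "\<exists>xs. is_walk E xs \<and> hd xs = x \<and> last xs = y \<and> length xs = Suc n"
    then obtain xs where xs: "is_walk E xs" "hd xs = x" "last xs = y" "length xs = Suc n" by blast
    then have "xs \<noteq> []" by (simp add: walk_succ)
    then have "is_walk E (rev xs) \<and> hd (rev xs) = y \<and> last (rev xs) = x \<and> length (rev xs) = Suc n"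
      using xs rw by (simp add: hd_rev last_rev)
    then show "\<exists>xs. is_walk E xs \<and> hd xs = y \<and> last xs = x \<and> length xs = Suc n" by blast
  next
    fix n assume "\<exists>xs. is_walk E xs \<and> hd xs = y \<and> last xs = x \<and> length xs = Suc n"
    then obtain xs where xs: "is_walk E xs" "hd xs = y" "last xs = x" "length xs = Suc n" by blast
    then have "xs \<noteq> []" by (simp add: walk_succ)
    then have "is_walk E (rev xs) \<and> hd (rev xs) = x \<and> last (rev xs) = y \<and> length (rev xs) = Suc n"
      using xs rw by (simp add: hd_rev last_rev)
    then show "\<exists>xs. is_walk E xs \<and> hd xs = x \<and> last xs = y \<and> length xs = Suc n" by blast
  qed
  then show ?thesis unfolding gdist_def by simp
qed
definition lw :: "('a \<Rightarrow> 'a \<Rightarrow> bool) \<Rightarrow> 'a list \<Rightarrow> bool" where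
  "lw R xs \<longleftrightarrow> xs \<noteq> [] \<and> successively (\<lambda>a b. a = b \<or> R a b) xs"

lemma lw_walk: "lw R xs \<Longrightarrow> \<exists>ws. is_walk R ws \<and> hd ws = hd xs \<and> last ws = last xs \<and> length ws \<le> length xs"
proof (induction xs)
  case Nil then show ?case by (simp add: lw_def)
next
  case (Cons x xs)
  show ?case
  proof (cases xs)
    case Nil
    have "is_walk R [x]" by (simp add: walk_succ)
    then show ?thesis using Nil by force
  next
    case C: (Cons y ys)
    have l: "lw R xs" using Cons.prems C by (simp add: lw_def)
    have xy: "x = y \<or> R x y" using Cons.prems C by (simp add: lw_def)
    obtain ws where ws: "is_walk R ws" "hd ws = hd xs" "last ws = last xs" "length ws \<le> length xs"
      using Cons.IH[OF l] by blast
    have ne: "ws \<noteq> []" using ws(1) by (simp add: walk_succ)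
    show ?thesis
    proof (cases "x = y")
      case True
      have "hd ws = x" using ws(2) C True by simp
      moreover have "last ws = last (x # xs)" using ws(3) C by simp
      moreover have "length ws \<le> length (x # xs)" using ws(4) by simp
      ultimately show ?thesis using ws(1) by (intro exI[of _ ws]) simp
    next
      case False
      then have "R x y" using xy by simp
      have "successively R ws" using ws(1) by (simp add: walk_succ)
      then have "successively R (x # ws)" using ws(2) C \<open>R x y\<close> ne by (simp add: successively_Cons)
      then have "is_walk R (x # ws)" by (simp add: walk_succ)
      moreover have "last (x # ws) = last (x # xs)" using ws(3) C ne by simp
      moreover have "length (x # ws) \<le> length (x # xs)" using ws(4) by simp
      ultimately show ?thesis by (intro exI[of _ "x # ws"]) simp
    qed
  qed
qed

lemma walk_gdist_lw: "lw R xs \<Longrightarrow> gdist R (hd xs) (last xs) \<le> length xs - 1"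
proof -
  assume "lw R xs"
  from lw_walk[OF this] obtain ws where ws: "is_walk R ws" "hd ws = hd xs" "last ws = last xs" "length ws \<le> length xs" by blast
  from gdist_le[OF ws(1)] ws(2-4) show ?thesis by simp
qed

definition reach :: "('a \<Rightarrow> 'a \<Rightarrow> bool) \<Rightarrow> real \<Rightarrow> 'a set \<Rightarrow> 'a \<Rightarrow> 'a \<Rightarrow> bool" where
  "reach E k S x y \<longleftrightarrow> (\<exists>xs. xs \<noteq> [] \<and> hd xs = x \<and> last xs = y \<and> set xs \<subseteq> S
      \<and> successively (\<lambda>a b. real (gdist E a b) \<le> k) xs)"

lemma kconn_reach: "k_connected E k X \<longleftrightarrow> (\<forall>x\<in>X. \<forall>y\<in>X. reach E k X x y)"
  unfolding k_connected_def reach_def successively_conv_nth by blast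

lemma reach_refl: "x \<in> S \<Longrightarrow> reach E k S x x"
  unfolding reach_def by (intro exI[of _ "[x]"]) simp

lemma reach_mem: "reach E k S x y \<Longrightarrow> x \<in> S \<and> y \<in> S"
  proof -
  assume "reach E k S x y"
  then obtain xs where "xs \<noteq> []" "hd xs = x" "last xs = y" "set xs \<subseteq> S" unfolding reach_def by blast
  then show ?thesis using hd_in_set last_in_set by blast
qed

lemma reach_sym:
  assumes sym: "\<forall>x y. E x y \<longrightarrow> E y x" and r: "reach E k S x y" shows "reach E k S y x"
proof -
  obtain xs where xs: "xs \<noteq> []" "hd xs = x" "last xs = y" "set xs \<subseteq> S"
    "successively (\<lambda>a b. real (gdist E a b) \<le> k) xs" using r unfolding reach_def by blast
  have "successively (\<lambda>a b. real (gdist E b a) \<le> k) xs" using xs(5) gdist_sym[OF sym] by simp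
  then have "successively (\<lambda>a b. real (gdist E a b) \<le> k) (rev xs)" by simp
  then show ?thesis unfolding reach_def using xs
    by (intro exI[of _ "rev xs"]) (simp add: hd_rev last_rev)
qed

lemma reach_trans:
  assumes r1: "reach E k S x y" and r2: "reach E k S y z" shows "reach E k S x z"
proof -
  obtain xs where xs: "xs \<noteq> []" "hd xs = x" "last xs = y" "set xs \<subseteq> S"
    "successively (\<lambda>a b. real (gdist E a b) \<le> k) xs" using r1 unfolding reach_def by blast
  obtain ys where ys: "ys \<noteq> []" "hd ys = y" "last ys = z" "set ys \<subseteq> S"
    "successively (\<lambda>a b. real (gdist E a b) \<le> k) ys" using r2 unfolding reach_def by blast
  obtain ys' where ys': "ys = y # ys'" using ys(1,2) by (cases ys) auto
  have s2: "successively (\<lambda>a b. real (gdist E a b) \<le> k) ys'" 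
    and s3: "ys' \<noteq> [] \<longrightarrow> real (gdist E y (hd ys')) \<le> k"
    using ys(5) ys' by (auto simp: successively_Cons)
  have "successively (\<lambda>a b. real (gdist E a b) \<le> k) (xs @ ys')"
    using xs(5) s2 s3 xs(3) by (auto simp: successively_append_iff)
  moreover have "last (xs @ ys') = z" using xs ys ys' by auto
  moreover have "set (xs @ ys') \<subseteq> S" using xs ys ys' by auto
  ultimately show ?thesis unfolding reach_def using xs
    by (intro exI[of _ "xs @ ys'"]) simp
qed

lemma reach_prefix:
  assumes xs: "xs \<noteq> []" "set xs \<subseteq> S" "successively (\<lambda>a b. real (gdist E a b) \<le> k) xs"
    and w: "w \<in> set xs"
  shows "reach E k S (hd xs) w"
proof -
  obtain as bs where ab: "xs = as @ w # bs" using w by (meson split_list)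
  have "successively (\<lambda>a b. real (gdist E a b) \<le> k) ((as @ [w]) @ bs)" using xs(3) ab by simp
  then have "successively (\<lambda>a b. real (gdist E a b) \<le> k) (as @ [w])"
    by (simp only: successively_append_iff)
  moreover have "hd (as @ [w]) = hd xs" using ab by (cases as) auto
  moreover have "set (as @ [w]) \<subseteq> S" using xs(2) ab by auto
  ultimately show ?thesis unfolding reach_def by (intro exI[of _ "as @ [w]"]) simp
qed

context
  fixes V :: "'a set" and E :: "'a \<Rightarrow> 'a \<Rightarrow> bool" and x0 :: 'a and lam k :: real
  assumes symE: "\<forall>x y. E x y \<longrightarrow> E y x" and lampos: "lam > 0"
begin

lemma layer_unique:
  assumes "x \<in> layer V E x0 lam N" "x \<in> layer V E x0 lam M" shows "N = M"
proof -
  have a: "real_of_int N * lam < real_of_int (M + 1) * lam" "real_of_int M * lam < real_of_int (N + 1) * lam"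
    using assms unfolding layer_def by auto
  have "real_of_int N < real_of_int (M + 1)" "real_of_int M < real_of_int (N + 1)"
    using a lampos mult_less_cancel_right_pos by blast+
  then have "N < M + 1" "M < N + 1" by (simp_all only: of_int_less_iff)
  then show ?thesis by simp
qed

lemma layer_ex:
  assumes "x \<in> V" shows "x \<in> layer V E x0 lam (\<lceil>real (gdist E x x0) / lam\<rceil> - 1)"
proof -
  define d where "d = real (gdist E x x0)"
  define c where "c = \<lceil>d / lam\<rceil>"
  have c: "real_of_int c - 1 < d / lam" "d / lam \<le> real_of_int c" using ceiling_correct c_def by blast+
  have "(real_of_int c - 1) * lam < d" using c(1) lampos by (simp add: pos_less_divide_eq)
  moreover have "d \<le> real_of_int c * lam" using c(2) lampos by (simp add: pos_divide_le_eq)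
  ultimately show ?thesis using assms unfolding layer_def d_def c_def by simp
qed

definition cls :: "int \<Rightarrow> 'a \<Rightarrow> 'a set" where
  "cls N x = {y. reach E k (layer V E x0 lam N) x y}"

lemma cls_kconn: assumes "x \<in> layer V E x0 lam N" shows "k_connected E k (cls N x)"
  unfolding kconn_reach
proof (intro ballI)
  fix y z assume y: "y \<in> cls N x" and z: "z \<in> cls N x"
  have xy: "reach E k (layer V E x0 lam N) x y" using y unfolding cls_def by simp
  have xz: "reach E k (layer V E x0 lam N) x z" using z unfolding cls_def by simp
  have "reach E k (layer V E x0 lam N) y z" using reach_trans[OF reach_sym[OF symE xy] xz] .
  then obtain xs where xs: "xs \<noteq> []" "hd xs = y" "last xs = z" "set xs \<subseteq> layer V E x0 lam N"
    "successively (\<lambda>a b. real (gdist E a b) \<le> k) xs" unfolding reach_def by auto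
  have "set xs \<subseteq> cls N x"
  proof
    fix w assume "w \<in> set xs"
    then have "reach E k (layer V E x0 lam N) y w" using reach_prefix[OF xs(1) xs(4) xs(5)] xs(2) by simp
    then have "reach E k (layer V E x0 lam N) x w" using reach_trans[OF xy] by simp
    then show "w \<in> cls N x" unfolding cls_def by simp
  qed
  then show "reach E k (cls N x) y z" unfolding reach_def using xs by (intro exI[of _ xs]) simp
qed

lemma cls_sub: "cls N x \<subseteq> layer V E x0 lam N"
proof
  fix y assume "y \<in> cls N x"
  then have "reach E k (layer V E x0 lam N) x y" unfolding cls_def by simp
  then show "y \<in> layer V E x0 lam N" using reach_mem by fast
qed

lemma cls_self: "x \<in> layer V E x0 lam N \<Longrightarrow> x \<in> cls N x"
  unfolding cls_def by (simp add: reach_refl)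

lemma block_sub_cls:
  assumes B: "B \<subseteq> layer V E x0 lam N" "k_connected E k B" and x: "x \<in> B"
  shows "B \<subseteq> cls N x"
proof
  fix b assume b: "b \<in> B"
  have "reach E k B x b" using B(2) x b unfolding kconn_reach by simp
  then obtain xs where xs: "xs \<noteq> []" "hd xs = x" "last xs = b" "set xs \<subseteq> B"
    "successively (\<lambda>a b. real (gdist E a b) \<le> k) xs" unfolding reach_def by auto
  have "set xs \<subseteq> layer V E x0 lam N" using xs(4) B(1) by (rule order_trans)
  then have "reach E k (layer V E x0 lam N) x b" unfolding reach_def using xs by (intro exI[of _ xs]) simp
  then show "b \<in> cls N x" unfolding cls_def by simp
qed

lemma cls_block: assumes xN: "x \<in> layer V E x0 lam N" shows "cls N x \<in> skel_verts V E x0 lam k"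
proof -
  have ne: "cls N x \<noteq> {}" using cls_self[OF xN] by auto
  have mx: "C = cls N x" if C: "cls N x \<subseteq> C" "C \<subseteq> layer V E x0 lam N" "k_connected E k C" for C
  proof -
    have "x \<in> C" using C(1) cls_self[OF xN] by (rule subsetD)
    then have "C \<subseteq> cls N x" using block_sub_cls[OF C(2) C(3)] by simp
    then show ?thesis using C(1) by (rule antisym)
  qed
  have "\<exists>N'. cls N x \<noteq> {} \<and> cls N x \<subseteq> layer V E x0 lam N' \<and> k_connected E k (cls N x) \<and>
      (\<forall>C. cls N x \<subseteq> C \<and> C \<subseteq> layer V E x0 lam N' \<and> k_connected E k C \<longrightarrow> C = cls N x)"
    using ne cls_sub[of N x] cls_kconn[OF xN] mx by (intro exI[of _ N]) blast
  then show ?thesis unfolding skel_verts_def by simp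
qed

lemma block_eq_cls:
  assumes B: "B \<in> skel_verts V E x0 lam k" and x: "x \<in> B" and xN: "x \<in> layer V E x0 lam N"
  shows "B = cls N x"
proof -
  obtain M where M: "B \<subseteq> layer V E x0 lam M" "k_connected E k B"
    "\<And>C. B \<subseteq> C \<and> C \<subseteq> layer V E x0 lam M \<and> k_connected E k C \<Longrightarrow> C = B"
    using B unfolding skel_verts_def by auto
  have "x \<in> layer V E x0 lam M" using M(1) x by (rule subsetD)
  then have MN: "M = N" using layer_unique xN by simp
  have 1: "B \<subseteq> cls N x" using block_sub_cls[OF _ M(2) x] M(1) MN by simp
  have 2: "cls N x \<subseteq> layer V E x0 lam M" using cls_sub MN by simp
  have "cls N x = B" using M(3)[of "cls N x"] 1 2 cls_kconn[OF xN] by simp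
  then show ?thesis by simp
qed

lemma nat_map_eq:
  assumes xN: "x \<in> layer V E x0 lam N" shows "nat_map V E x0 lam k x = cls N x"
  unfolding nat_map_def
proof (rule the_equality)
  show "cls N x \<in> skel_verts V E x0 lam k \<and> x \<in> cls N x" using cls_block[OF xN] cls_self[OF xN] by simp
  fix B assume "B \<in> skel_verts V E x0 lam k \<and> x \<in> B"
  then show "B = cls N x" using block_eq_cls xN by simp
qed

lemma nat_map_in:
  assumes "x \<in> V" shows "nat_map V E x0 lam k x \<in> skel_verts V E x0 lam k \<and> x \<in> nat_map V E x0 lam k x"
  using nat_map_eq[OF layer_ex[OF assms]] cls_block[OF layer_ex[OF assms]] cls_self[OF layer_ex[OF assms]] by simp

lemma skel_sub: "B \<in> skel_verts V E x0 lam k \<Longrightarrow> B \<subseteq> V"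
  unfolding skel_verts_def layer_def by auto

lemma nat_map_uniq:
  assumes "B \<in> skel_verts V E x0 lam k" "x \<in> B" shows "nat_map V E x0 lam k x = B"
proof -
  have "x \<in> V" using skel_sub[OF assms(1)] assms(2) by (rule subsetD)
  then show ?thesis using nat_map_eq[OF layer_ex] block_eq_cls[OF assms layer_ex] by simp
qed

lemma nat_map_same:
  assumes "x \<in> layer V E x0 lam N" "y \<in> layer V E x0 lam N" "real (gdist E x y) \<le> k"
  shows "nat_map V E x0 lam k x = nat_map V E x0 lam k y"
proof -
  have xy: "reach E k (layer V E x0 lam N) x y" unfolding reach_def using assms
    by (intro exI[of _ "[x, y]"]) simp
  then have r: "reach E k (layer V E x0 lam N) y x" using reach_sym[OF symE] by simp
  have "cls N x = cls N y" unfolding cls_def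
  proof (intro set_eqI iffI; unfold mem_Collect_eq)
    fix w assume "reach E k (layer V E x0 lam N) x w" then show "reach E k (layer V E x0 lam N) y w"
      using reach_trans[OF r] by simp
  next
    fix w assume "reach E k (layer V E x0 lam N) y w" then show "reach E k (layer V E x0 lam N) x w"
      using reach_trans[OF xy] by simp
  qed
  then show ?thesis using nat_map_eq assms by simp
qed

lemma nat_map_edge:
  assumes "E x y" "x \<in> V" "y \<in> V"
  shows "nat_map V E x0 lam k x = nat_map V E x0 lam k y \<or>
         skel_edges V E x0 lam k (nat_map V E x0 lam k x) (nat_map V E x0 lam k y)"
  using nat_map_in[OF assms(2)] nat_map_in[OF assms(3)] assms(1) unfolding skel_edges_def by auto

end

lemma walk_set:
  assumes EV: "\<forall>x y. E x y \<longrightarrow> x \<in> V \<and> y \<in> V" and w: "is_walk E xs" and h: "hd xs \<in> V"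
  shows "set xs \<subseteq> V"
proof
  fix v assume "v \<in> set xs"
  then obtain i where i: "i < length xs" "xs ! i = v" by (auto simp: in_set_conv_nth)
  show "v \<in> V"
  proof (cases i)
    case 0
    have "xs \<noteq> []" using i by auto
    then show ?thesis using h i 0 by (simp add: hd_conv_nth)
  next
    case (Suc j)
    have "Suc j < length xs" using i Suc by simp
    then have "E (xs ! j) (xs ! Suc j)" using w unfolding is_walk_def by blast
    then show ?thesis using EV i Suc by blast
  qed
qed

lemma skel_conn:
  assumes cg: "conn_graph V E" and lampos: "lam > 0"
  shows "conn_graph (skel_verts V E x0 lam k) (skel_edges V E x0 lam k)"
proof -
  have symE: "\<forall>x y. E x y \<longrightarrow> E y x" and EV: "\<forall>x y. E x y \<longrightarrow> x \<in> V \<and> y \<in> V"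
    and Vne: "V \<noteq> {}" and wk: "\<forall>x\<in>V. \<forall>y\<in>V. \<exists>xs. is_walk E xs \<and> hd xs = x \<and> last xs = y"
    using cg unfolding conn_graph_def by auto
  note nm_in = nat_map_in[OF symE lampos]
  note nm_uniq = nat_map_uniq[OF symE lampos]
  note nm_edge = nat_map_edge[OF symE lampos]
  let ?V = "skel_verts V E x0 lam k" and ?E = "skel_edges V E x0 lam k" and ?f = "nat_map V E x0 lam k"
  obtain v where "v \<in> V" using Vne by auto
  then have "?V \<noteq> {}" using nm_in by blast
  moreover have "\<forall>x y. ?E x y \<longrightarrow> x \<in> ?V \<and> y \<in> ?V" unfolding skel_edges_def by simp
  moreover have "\<forall>x y. ?E x y \<longrightarrow> ?E y x" unfolding skel_edges_def using symE by blast
  moreover have "\<forall>B\<in>?V. \<forall>C\<in>?V. \<exists>xs. is_walk ?E xs \<and> hd xs = B \<and> last xs = C"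
  proof (intro ballI)
    fix B C assume B: "B \<in> ?V" and C: "C \<in> ?V"
    obtain x where x: "x \<in> B" using B unfolding skel_verts_def by auto
    obtain y where y: "y \<in> C" using C unfolding skel_verts_def by auto
    have xV: "x \<in> V" using skel_sub[OF symE lampos B] x by auto
    have yV: "y \<in> V" using skel_sub[OF symE lampos C] y by auto
    obtain xs where xs: "is_walk E xs" "hd xs = x" "last xs = y" using wk xV yV by blast
    have sV: "set xs \<subseteq> V" using walk_set[OF EV xs(1)] xs(2) xV by simp
    have ne: "xs \<noteq> []" and sE: "successively E xs" using xs(1) by (auto simp: walk_succ)
    have "successively (\<lambda>a b. ?f a = ?f b \<or> ?E (?f a) (?f b)) xs"
      using sE by (rule successively_mono) (use sV nm_edge in blast)
    then have "lw ?E (map ?f xs)" unfolding lw_def successively_map using ne by simp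
    then obtain ws where ws: "is_walk ?E ws" "hd ws = hd (map ?f xs)" "last ws = last (map ?f xs)"
      using lw_walk by blast
    have "hd (map ?f xs) = B" using ne xs(2) nm_uniq[OF B x] by (simp add: hd_map)
    moreover have "last (map ?f xs) = C" using ne xs(3) nm_uniq[OF C y] by (simp add: last_map)
    ultimately show "\<exists>xs. is_walk ?E xs \<and> hd xs = B \<and> last xs = C" using ws by auto
  qed
  ultimately show ?thesis unfolding conn_graph_def by blast
qed

lemma layer_arith:
  fixes a b c :: nat
  assumes "b \<le> a + 1" "a \<le> b + 1" "c \<le> b + 1" "b \<le> c + 1"
    "(int a + 1) div 2 \<noteq> (int c + 1) div 2" "(int a + 1) div 2 \<noteq> (int b + 1) div 2"
  shows "(int b + 1) div 2 = (int c + 1) div 2"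
  using assms by presburger

context
  fixes V' :: "'b set" and E' :: "'b \<Rightarrow> 'b \<Rightarrow> bool" and E'' :: "'c \<Rightarrow> 'c \<Rightarrow> bool"
    and f :: "'b \<Rightarrow> 'c" and \<rho> :: "'b \<Rightarrow> nat"
  assumes edge: "\<And>a b. a \<in> V' \<Longrightarrow> b \<in> V' \<Longrightarrow> E' a b \<Longrightarrow> f a = f b \<or> E'' (f a) (f b)"
    and same: "\<And>a c. a \<in> V' \<Longrightarrow> c \<in> V' \<Longrightarrow> (int (\<rho> a) + 1) div 2 = (int (\<rho> c) + 1) div 2
                  \<Longrightarrow> gdist E' a c \<le> 2 \<Longrightarrow> f a = f c"
    and rho: "\<And>a b. a \<in> V' \<Longrightarrow> b \<in> V' \<Longrightarrow> E' a b \<Longrightarrow> \<rho> b \<le> \<rho> a + 1 \<and> \<rho> a \<le> \<rho> b + 1"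
begin

lemma comb:
  "is_walk E' ws \<Longrightarrow> set ws \<subseteq> V' \<Longrightarrow>
    \<exists>zs. lw E'' zs \<and> hd zs = f (hd ws) \<and> last zs = f (last ws) \<and> length zs \<le> length ws div 2 + 1"
proof (induction ws rule: induct_list012)
  case 1 then show ?case by (simp add: walk_succ)
next
  case (2 x) then show ?case by (intro exI[of _ "[f x]"]) (simp add: lw_def)
next
  case (3 x y zs)
  have xyV: "x \<in> V'" "y \<in> V'" using "3.prems" by auto
  have Exy: "E' x y" and wy: "is_walk E' (y # zs)" using "3.prems" by (auto simp: walk_succ)
  have sy: "set (y # zs) \<subseteq> V'" using "3.prems" by auto
  show ?case
  proof (cases zs)
    case Nil
    have "lw E'' [f x, f y]" using edge[OF xyV Exy] by (auto simp: lw_def)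
    then show ?thesis using Nil by (intro exI[of _ "[f x, f y]"]) simp
  next
    case (Cons c rest)
    have cV: "c \<in> V'" using "3.prems" Cons by auto
    have Eyc: "E' y c" using wy Cons by (simp add: walk_succ)
    have wz: "is_walk E' zs" using wy Cons by (simp add: walk_succ)
    have sz: "set zs \<subseteq> V'" using "3.prems" by auto
    have r1: "\<rho> y \<le> \<rho> x + 1" "\<rho> x \<le> \<rho> y + 1" using rho[OF xyV Exy] by auto
    have r2: "\<rho> c \<le> \<rho> y + 1" "\<rho> y \<le> \<rho> c + 1" using rho[OF xyV(2) cV Eyc] by auto
    have "is_walk E' [x, y, c]" using Exy Eyc by (simp add: walk_succ)
    then have gxc: "gdist E' x c \<le> 2" using gdist_le[of E' "[x,y,c]"] by simp
    have "is_walk E' [x, y]" using Exy by (simp add: walk_succ)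
    then have gxy: "gdist E' x y \<le> 2" using gdist_le[of E' "[x,y]"] by simp
    show ?thesis
    proof (cases "(int (\<rho> x) + 1) div 2 = (int (\<rho> c) + 1) div 2")
      case True
      then have fxc: "f x = f c" using same[OF xyV(1) cV _ gxc] by simp
      obtain zs' where z: "lw E'' zs'" "hd zs' = f (hd zs)" "last zs' = f (last zs)" "length zs' \<le> length zs div 2 + 1"
        using "3.IH"(1)[OF wz sz] by blast
      show ?thesis using z fxc Cons by (intro exI[of _ zs']) auto
    next
      case F1: False
      show ?thesis
      proof (cases "(int (\<rho> x) + 1) div 2 = (int (\<rho> y) + 1) div 2")
        case True
        then have fxy: "f x = f y" using same[OF xyV(1) xyV(2) _ gxy] by simp
        obtain zs' where z: "lw E'' zs'" "hd zs' = f (hd (y#zs))" "last zs' = f (last (y#zs))" "length zs' \<le> length (y#zs) div 2 + 1"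
          using "3.IH"(2)[OF wy sy] by blast
        show ?thesis using z fxy Cons by (intro exI[of _ zs']) auto
      next
        case F2: False
        have "(int (\<rho> y) + 1) div 2 = (int (\<rho> c) + 1) div 2" using layer_arith[OF r1 r2(1) r2(2) F1 F2] by simp
        then have fyc: "f y = f c" using same[OF xyV(2) cV] gdist_le[of E' "[y,c]"] Eyc by (simp add: walk_succ)
        obtain zs' where z: "lw E'' zs'" "hd zs' = f (hd zs)" "last zs' = f (last zs)" "length zs' \<le> length zs div 2 + 1"
          using "3.IH"(1)[OF wz sz] by blast
        have ne: "zs' \<noteq> []" using z(1) by (simp add: lw_def)
        have "f x = f y \<or> E'' (f x) (f y)" using edge[OF xyV Exy] .
        then have "lw E'' (f x # zs')" using z(1,2) ne fyc Cons by (auto simp: lw_def successively_Cons)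
        moreover have "last (f x # zs') = f (last (x # y # zs))" using z(3) ne Cons by simp
        moreover have "length (f x # zs') \<le> length (x # y # zs) div 2 + 1" using z(4) by simp
        ultimately show ?thesis by (intro exI[of _ "f x # zs'"]) simp
      qed
    qed
  qed
qed

end

lemma final_arith:
  fixes d m :: nat and n :: real
  assumes "2 * d \<le> m + 1" "n < real d" "n > 1"
  shows "n + n / 2 < real m"
proof (cases "m \<le> 2")
  case True
  then have "d \<le> 1" using assms(1) by simp
  then have "real d \<le> 1" by simp
  then show ?thesis using assms(2,3) \<open>m \<le> 2\<close> by linarith
next
  case False
  have "real (2 * d) \<le> real (m + 1)" using assms(1) by (simp only: of_nat_le_iff)
  then have "2 * real d \<le> real m + 1" by simp
  moreover have "real m \<ge> 3" using False by simp
  ultimately show ?thesis using assms by linarith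
qed

lemma rho_step:
  assumes cg: "conn_graph V E" and r: "r \<in> V" and a: "a \<in> V" and e: "E b a"
  shows "gdist E b r \<le> gdist E a r + 1"
proof -
  obtain xs where xs: "is_walk E xs" "hd xs = a" "last xs = r" using cg r a unfolding conn_graph_def by blast
  obtain ws where ws: "is_walk E ws" "hd ws = a" "last ws = r" "length ws = Suc (gdist E a r)"
    using gdist_walk[OF xs(1)] xs(2,3) by auto
  have ne: "ws \<noteq> []" using ws(1) by (simp add: walk_succ)
  have "successively E (b # ws)" using ws(1,2) ne e by (simp add: walk_succ successively_Cons)
  then have "is_walk E (b # ws)" by (simp add: walk_succ)
  from gdist_le[OF this] show ?thesis using ws ne by simp
qed

theorem lemma6:
  fixes V :: "'a set" and E :: "'a \<Rightarrow> 'a \<Rightarrow> bool" and x0 :: 'a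
    and lam k n :: real and X Y :: "'a set set set"
  assumes "conn_graph V E" and "x0 \<in> V" and "lam \<ge> 1" and "k \<ge> 1"
  defines "V' \<equiv> skel_verts V E x0 lam k"
      and "E' \<equiv> skel_edges V E x0 lam k"
      and "r' \<equiv> skel_root V E x0 lam k"
  defines "V'' \<equiv> skel_verts V' E' r' 2 2"
      and "E'' \<equiv> skel_edges V' E' r' 2 2"
  assumes "X \<subseteq> V''" and "Y \<subseteq> V''" and "n > 1"
    and "r_disjoint E'' n X Y"
  shows "r_disjoint E' (n + n / 2)
           {B \<in> V'. nat_map V' E' r' 2 2 B \<in> X} {B \<in> V'. nat_map V' E' r' 2 2 B \<in> Y}"
proof -
  note cg = assms(1)
  have lampos: "lam > 0" using assms(3) by simp
  have symE: "\<forall>x y. E x y \<longrightarrow> E y x" using cg unfolding conn_graph_def by blast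
  have cg': "conn_graph V' E'" unfolding V'_def E'_def using skel_conn[OF cg lampos] .
  have symE': "\<forall>x y. E' x y \<longrightarrow> E' y x" and EV': "\<forall>x y. E' x y \<longrightarrow> x \<in> V' \<and> y \<in> V'"
    and wk': "\<forall>x\<in>V'. \<forall>y\<in>V'. \<exists>xs. is_walk E' xs \<and> hd xs = x \<and> last xs = y"
    using cg' unfolding conn_graph_def by auto
  have r'eq: "r' = nat_map V E x0 lam k x0" unfolding r'_def skel_root_def nat_map_def ..
  have r'V: "r' \<in> V'" using nat_map_in[OF symE lampos assms(2)] r'eq V'_def by simp
  define \<rho> where "\<rho> B = gdist E' B r'" for B
  define f where "f = nat_map V' E' r' 2 2"
  have two: "(2::real) > 0" by simp
  have rho: "\<rho> b \<le> \<rho> a + 1 \<and> \<rho> a \<le> \<rho> b + 1" if "a \<in> V'" "b \<in> V'" "E' a b" for a b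
  proof -
    have "E' b a" using symE' that(3) by simp
    then show ?thesis using rho_step[OF cg' r'V that(1) \<open>E' b a\<close>] rho_step[OF cg' r'V that(2) that(3)]
      unfolding \<rho>_def by simp
  qed
  have lay: "a \<in> layer V' E' r' 2 ((int (\<rho> a) + 1) div 2 - 1)" if "a \<in> V'" for a
  proof -
    define L where "L = (int (\<rho> a) + 1) div 2 - 1"
    have "2 * L < int (\<rho> a)" "int (\<rho> a) \<le> 2 * L + 2" unfolding L_def by presburger+
    then have "real_of_int (2 * L) < real_of_int (int (\<rho> a))" "real_of_int (int (\<rho> a)) \<le> real_of_int (2 * L + 2)"
      by (simp_all only: of_int_less_iff of_int_le_iff)
    then have "real_of_int L * 2 < real (\<rho> a)" "real (\<rho> a) \<le> (real_of_int L + 1) * 2" by simp_all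
    then show ?thesis using that unfolding layer_def L_def \<rho>_def by simp
  qed
  have same: "f a = f c" if "a \<in> V'" "c \<in> V'" "(int (\<rho> a) + 1) div 2 = (int (\<rho> c) + 1) div 2"
    "gdist E' a c \<le> 2" for a c
    using nat_map_same[OF symE' two lay[OF that(1)], of c 2] lay[OF that(2)] that(3,4) unfolding f_def by simp
  have edge: "f a = f b \<or> E'' (f a) (f b)" if "a \<in> V'" "b \<in> V'" "E' a b" for a b
    using nat_map_edge[OF symE' two that(3) that(1) that(2), of r' 2] unfolding f_def E''_def by simp
  show ?thesis unfolding r_disjoint_def
  proof (intro ballI)
    fix a b assume a: "a \<in> {B \<in> V'. nat_map V' E' r' 2 2 B \<in> X}" and b: "b \<in> {B \<in> V'. nat_map V' E' r' 2 2 B \<in> Y}"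
    have aV: "a \<in> V'" and bV: "b \<in> V'" and fa: "f a \<in> X" and fb: "f b \<in> Y" using a b f_def by auto
    have dn: "n < real (gdist E'' (f a) (f b))" using \<open>r_disjoint E'' n X Y\<close> fa fb unfolding r_disjoint_def by simp
    obtain xs where xs: "is_walk E' xs" "hd xs = a" "last xs = b" using wk' aV bV by blast
    obtain ws where ws: "is_walk E' ws" "hd ws = a" "last ws = b" "length ws = Suc (gdist E' a b)"
      using gdist_walk[OF xs(1)] xs(2,3) by auto
    have sV: "set ws \<subseteq> V'" using walk_set[OF EV' ws(1)] ws(2) aV by simp
    have "\<exists>zs. lw E'' zs \<and> hd zs = f (hd ws) \<and> last zs = f (last ws) \<and> length zs \<le> length ws div 2 + 1"
      by (rule comb[where V'=V' and E'=E' and E''=E'' and f=f and \<rho>=\<rho>, OF edge same rho ws(1) sV])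
    then obtain zs where zs: "lw E'' zs" "hd zs = f (hd ws)" "last zs = f (last ws)" "length zs \<le> length ws div 2 + 1"
      by blast
    have g: "gdist E'' (hd zs) (last zs) \<le> length zs - 1" by (rule walk_gdist_lw[OF zs(1)])
    have g2: "gdist E'' (f a) (f b) \<le> length zs - 1" using g zs(2,3) ws(2,3) by simp
    have "length zs - 1 \<le> length ws div 2" using zs(4) by linarith
    then have "gdist E'' (f a) (f b) \<le> Suc (gdist E' a b) div 2" using g2 ws(4) by linarith
    then have "2 * gdist E'' (f a) (f b) \<le> gdist E' a b + 1" by linarith
    then show "n + n / 2 < real (gdist E' a b)" by (rule final_arith[OF _ dn \<open>n > 1\<close>])
  qed
qed

end
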